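(* For every $d\ge 2$, $\mu(\mathit{BF}(d))\le 2^{d+1}-2$.
   Context: Binary strings $c=c_0\cdots c_{d-1}$ have positions $0,\dots,d-1$ from the left; $c(i)$ is $c$ with bit $i$ complemented. $\mathit{BF}(d)$ has vertex set $\{[\ell,c]:\ell\in\{0,\dots,d\},\ c\in\{0,1\}^d\}$; for $\ell\in\{0,\dots,d-1\}$, $[\ell,c]$ is adjacent to $[\ell+1,c']$ iff $c'=c$ or $c'=c(\ell)$, and there are no other edges. For a connected graph $G$ and $X\subseteq V(G)$, two vertices $x,y$ are $X$-visible if some shortest $x,y$-path has no internal vertex in $X$; $X$ is a mutual-visibility set if every two vertices of $X$ are $X$-visible; $\mu(G)$ is the maximum size of a mutual-visibility set. *)

theory Defs
  imports Main
begin

definition is_walk :: "'a set \<Rightarrow> ('a \<Rightarrow> 'a \<Rightarrow> bool) \<Rightarrow> 'a list \<Rightarrow> bool" where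
  "is_walk V E xs \<longleftrightarrow> xs \<noteq> [] \<and> set xs \<subseteq> V \<and>
     (\<forall>i. Suc i < length xs \<longrightarrow> E (xs ! i) (xs ! Suc i))"

definition walk_of_len :: "'a set \<Rightarrow> ('a \<Rightarrow> 'a \<Rightarrow> bool) \<Rightarrow> 'a \<Rightarrow> 'a \<Rightarrow> nat \<Rightarrow> 'a list \<Rightarrow> bool" where
  "walk_of_len V E x y k xs \<longleftrightarrow> is_walk V E xs \<and> hd xs = x \<and> last xs = y \<and> length xs = Suc k"

definition graph_dist :: "'a set \<Rightarrow> ('a \<Rightarrow> 'a \<Rightarrow> bool) \<Rightarrow> 'a \<Rightarrow> 'a \<Rightarrow> nat" where
  "graph_dist V E x y = (LEAST k. \<exists>xs. walk_of_len V E x y k xs)"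

definition shortest_path :: "'a set \<Rightarrow> ('a \<Rightarrow> 'a \<Rightarrow> bool) \<Rightarrow> 'a \<Rightarrow> 'a \<Rightarrow> 'a list \<Rightarrow> bool" where
  "shortest_path V E x y xs \<longleftrightarrow> walk_of_len V E x y (graph_dist V E x y) xs"

definition internal_vertices :: "'a list \<Rightarrow> 'a set" where
  "internal_vertices xs = set (butlast (tl xs))"

definition X_visible :: "'a set \<Rightarrow> ('a \<Rightarrow> 'a \<Rightarrow> bool) \<Rightarrow> 'a set \<Rightarrow> 'a \<Rightarrow> 'a \<Rightarrow> bool" where
  "X_visible V E X x y \<longleftrightarrow> (\<exists>xs. shortest_path V E x y xs \<and> internal_vertices xs \<inter> X = {})"

definition mutual_visibility_set :: "'a set \<Rightarrow> ('a \<Rightarrow> 'a \<Rightarrow> bool) \<Rightarrow> 'a set \<Rightarrow> bool" where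
  "mutual_visibility_set V E X \<longleftrightarrow> X \<subseteq> V \<and> (\<forall>x\<in>X. \<forall>y\<in>X. X_visible V E X x y)"

definition mu :: "'a set \<Rightarrow> ('a \<Rightarrow> 'a \<Rightarrow> bool) \<Rightarrow> nat" where
  "mu V E = Max {card X | X. mutual_visibility_set V E X}"

(* Butterfly BF(d): vertices [l,c] with l \<in> {0..d}, c a binary string of length d (a bool list).
   flip c i is c with bit i complemented. *)
definition flip :: "bool list \<Rightarrow> nat \<Rightarrow> bool list" where
  "flip c i = c[i := \<not> (c ! i)]"

definition BF_V :: "nat \<Rightarrow> (nat \<times> bool list) set" where
  "BF_V d = {(l, c). l \<le> d \<and> length c = d}"

definition BF_E0 :: "nat \<Rightarrow> (nat \<times> bool list) \<Rightarrow> (nat \<times> bool list) \<Rightarrow> bool" where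
  "BF_E0 d u v \<longleftrightarrow> u \<in> BF_V d \<and> v \<in> BF_V d \<and> fst u < d \<and> fst v = Suc (fst u) \<and>
     (snd v = snd u \<or> snd v = flip (snd u) (fst u))"

definition BF_E :: "nat \<Rightarrow> (nat \<times> bool list) \<Rightarrow> (nat \<times> bool list) \<Rightarrow> bool" where
  "BF_E d u v \<longleftrightarrow> BF_E0 d u v \<or> BF_E0 d v u"

end

theory Submission
  imports Defs
begin


lemma step_iff:
  assumes "length a = d" "length b = d" "l < d"
  shows "(b = a \<or> b = flip a l) \<longleftrightarrow> (\<forall>p<d. p \<noteq> l \<longrightarrow> a!p = b!p)"
proof
  assume "b = a \<or> b = flip a l"
  then show "\<forall>p<d. p \<noteq> l \<longrightarrow> a!p = b!p" using assms by (auto simp: flip_def)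
next
  assume h: "\<forall>p<d. p \<noteq> l \<longrightarrow> a!p = b!p"
  show "b = a \<or> b = flip a l"
  proof (cases "b!l = a!l")
    case True
    then have "b = a" using h assms by (intro nth_equalityI) auto
    then show ?thesis by simp
  next
    case False
    then have "b = flip a l" using h assms unfolding flip_def
      by (intro nth_equalityI) (auto simp: nth_list_update)
    then show ?thesis by simp
  qed
qed

lemma BF_E0_iff: "BF_E0 d (l,a) (l',b) \<longleftrightarrow> length a = d \<and> length b = d \<and> l \<le> d \<and> l' \<le> d \<and>
     (l' = Suc l \<and> (\<forall>p<d. p \<noteq> l \<longrightarrow> a!p = b!p))"
proof
  assume "BF_E0 d (l,a) (l',b)"
  then have h: "length a = d" "length b = d" "l < d" "l' = Suc l" "b = a \<or> b = flip a l"
    by (auto simp: BF_E0_def BF_V_def)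
  then have "\<forall>p<d. p \<noteq> l \<longrightarrow> a!p = b!p" using step_iff[of a d b l] by blast
  then show "length a = d \<and> length b = d \<and> l \<le> d \<and> l' \<le> d \<and>
     (l' = Suc l \<and> (\<forall>p<d. p \<noteq> l \<longrightarrow> a!p = b!p))" using h by simp
next
  assume h: "length a = d \<and> length b = d \<and> l \<le> d \<and> l' \<le> d \<and>
     (l' = Suc l \<and> (\<forall>p<d. p \<noteq> l \<longrightarrow> a!p = b!p))"
  then have "l < d" by simp
  then have "b = a \<or> b = flip a l" using step_iff[of a d b l] h by blast
  then show "BF_E0 d (l,a) (l',b)" using h \<open>l < d\<close> by (simp add: BF_E0_def BF_V_def)
qed

lemma BF_E_iff: "BF_E d (l,a) (l',b) \<longleftrightarrow> length a = d \<and> length b = d \<and> l \<le> d \<and> l' \<le> d \<and>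
   ((l' = Suc l \<and> (\<forall>p<d. p \<noteq> l \<longrightarrow> a!p = b!p)) \<or> (l = Suc l' \<and> (\<forall>p<d. p \<noteq> l' \<longrightarrow> a!p = b!p)))"
proof -
  have 3: "(\<forall>p<d. p \<noteq> l' \<longrightarrow> b!p = a!p) \<longleftrightarrow> (\<forall>p<d. p \<noteq> l' \<longrightarrow> a!p = b!p)" by auto
  show ?thesis unfolding BF_E_def using BF_E0_iff[of d l a l' b] BF_E0_iff[of d l' b l a] 3 by blast
qed

lemma BF_E_iff': "BF_E d x y \<longleftrightarrow> length (snd x) = d \<and> length (snd y) = d \<and> fst x \<le> d \<and> fst y \<le> d \<and>
   ((fst y = Suc (fst x) \<and> (\<forall>p<d. p \<noteq> fst x \<longrightarrow> snd x!p = snd y!p)) \<or> (fst x = Suc (fst y) \<and> (\<forall>p<d. p \<noteq> fst y \<longrightarrow> snd x!p = snd y!p)))"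
  using BF_E_iff[of d "fst x" "snd x" "fst y" "snd y"] by simp

lemma BF_E_sym: "BF_E d x y \<Longrightarrow> BF_E d y x"
  unfolding BF_E_def by blast

definition mix :: "nat \<Rightarrow> nat \<Rightarrow> bool list \<Rightarrow> bool list \<Rightarrow> bool list" where
  "mix d l e c = map (\<lambda>k. if k < l then e!k else c!k) [0..<d]"

lemma mix_len[simp]: "length (mix d l e c) = d" by (simp add: mix_def)
lemma mix_nth[simp]: "k < d \<Longrightarrow> mix d l e c ! k = (if k < l then e!k else c!k)" by (simp add: mix_def)

definition ble :: "nat \<Rightarrow> nat \<times> bool list \<Rightarrow> nat \<times> bool list \<Rightarrow> bool" where
  "ble d x y \<longleftrightarrow> fst x \<le> fst y \<and> (\<forall>k<d. (k < fst x \<or> fst y \<le> k) \<longrightarrow> snd x ! k = snd y ! k)"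

lemma ble_trans: "ble d x y \<Longrightarrow> ble d y z \<Longrightarrow> ble d x z"
  unfolding ble_def by (metis le_trans less_le_trans)

lemma ble_antisym: "ble d x y \<Longrightarrow> ble d y x \<Longrightarrow> x \<in> BF_V d \<Longrightarrow> y \<in> BF_V d \<Longrightarrow> x = y"
  unfolding ble_def BF_V_def
  by (cases x; cases y) (simp, rule nth_equalityI, auto)

lemma ble_same: "x \<in> BF_V d \<Longrightarrow> y \<in> BF_V d \<Longrightarrow> snd x = snd y \<Longrightarrow> ble d x y \<or> ble d y x"
  unfolding ble_def by auto

lemma ble_chain: "i \<le> j \<Longrightarrow> ble d (i, mix d i e c) (j, mix d j e c)"
  unfolding ble_def by auto

lemma ble_lev: "ble d x y \<Longrightarrow> x \<in> BF_V d \<Longrightarrow> y \<in> BF_V d \<Longrightarrow> x \<noteq> y \<Longrightarrow> fst x < fst y"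
  using ble_antisym[of d x y] unfolding ble_def
  by (metis le_neq_implies_less order_refl)



lemma walk_E: "is_walk (BF_V d) (BF_E d) xs \<Longrightarrow> Suc k < length xs \<Longrightarrow> BF_E d (xs!k) (xs!Suc k)"
  unfolding is_walk_def by blast

lemma walk_V: "is_walk (BF_V d) (BF_E d) xs \<Longrightarrow> k < length xs \<Longrightarrow> xs!k \<in> BF_V d"
  unfolding is_walk_def by auto

lemma BF_V_iff: "x \<in> BF_V d \<longleftrightarrow> fst x \<le> d \<and> length (snd x) = d"
  unfolding BF_V_def by (cases x) auto

lemma walk_lev_le:
  assumes w: "is_walk (BF_V d) (BF_E d) xs" and kk: "k \<le> k'" and k': "k' < length xs"
  shows "fst (xs!k') \<le> fst (xs!k) + (k'-k) \<and> fst (xs!k) \<le> fst (xs!k') + (k'-k)"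
  using kk k'
proof (induction k' rule: dec_induct)
  case base
  then show ?case by simp
next
  case (step n)
  have "BF_E d (xs!n) (xs!Suc n)" using walk_E[OF w] step by simp
  then have "fst (xs!Suc n) = Suc (fst (xs!n)) \<or> fst (xs!n) = Suc (fst (xs!Suc n))"
    unfolding BF_E_iff' by blast
  with step show ?case by auto
qed

lemma walk_mono:
  assumes w: "is_walk (BF_V d) (BF_E d) xs" and len: "length xs = Suc m"
    and lv: "fst (xs!m) = fst (xs!0) + m" and k: "k \<le> m"
  shows "xs!k = (fst (xs!0) + k, mix d (fst (xs!0) + k) (snd (xs!m)) (snd (xs!0)))"
proof -
  define i where "i = fst (xs!0)"
  have levs: "fst (xs!j) = i + j" if "j \<le> m" for j
  proof -
    have "fst (xs!j) \<le> i + j" using walk_lev_le[OF w, of 0 j] that len i_def by simp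
    moreover have "fst (xs!m) \<le> fst (xs!j) + (m - j)" using walk_lev_le[OF w, of j m] that len by simp
    ultimately show ?thesis using lv i_def that by simp
  qed
  have stepb: "\<forall>p<d. p \<noteq> i + j \<longrightarrow> snd (xs!j) ! p = snd (xs!Suc j) ! p" if "j < m" for j
  proof -
    have e: "BF_E d (xs!j) (xs!Suc j)" using walk_E[OF w] that len by simp
    have "fst (xs!Suc j) = Suc (fst (xs!j))" using levs[of j] levs[of "Suc j"] that by simp
    then show ?thesis using e levs[of j] that unfolding BF_E_iff' by auto
  qed
  have fw: "\<forall>p<d. i + j \<le> p \<longrightarrow> snd (xs!j) ! p = snd (xs!0) ! p" if "j \<le> m" for j
    using that
  proof (induction j)
    case 0 then show ?case by simp
  next
    case (Suc j)
    then show ?case using stepb[of j] by auto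
  qed
  have bw: "\<forall>p<d. p < i + k \<longrightarrow> snd (xs!j) ! p = snd (xs!k) ! p" if "k \<le> j" "j \<le> m" for j
    using that
  proof (induction j rule: dec_induct)
    case base then show ?case by simp
  next
    case (step n)
    then show ?case using stepb[of n] by auto
  qed
  have lenk: "length (snd (xs!k)) = d" using walk_V[OF w, of k] k len BF_V_iff by auto
  have "snd (xs!k) = mix d (i + k) (snd (xs!m)) (snd (xs!0))"
  proof (rule nth_equalityI)
    show "length (snd (xs ! k)) = length (mix d (i + k) (snd (xs ! m)) (snd (xs ! 0)))" using lenk by simp
    fix p assume "p < length (snd (xs ! k))"
    then have p: "p < d" using lenk by simp
    show "snd (xs ! k) ! p = mix d (i + k) (snd (xs ! m)) (snd (xs ! 0)) ! p"
      using fw[OF k] bw[of m] k p by auto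
  qed
  then show ?thesis using levs[OF k] i_def by (metis prod.collapse)
qed

lemma chain_walk:
  assumes x: "x \<in> BF_V d" and z: "z \<in> BF_V d" and le: "ble d x z"
  shows "walk_of_len (BF_V d) (BF_E d) x z (fst z - fst x)
           (map (\<lambda>k. (fst x + k, mix d (fst x + k) (snd z) (snd x))) [0..<Suc (fst z - fst x)])"
    (is "walk_of_len _ _ _ _ _ ?ys")
proof -
  have ij: "fst x \<le> fst z" using le unfolding ble_def by simp
  have lx: "length (snd x) = d" and lz: "length (snd z) = d" and zd: "fst z \<le> d"
    using x z BF_V_iff by auto
  have hd: "hd ?ys = x"
  proof -
    have "mix d (fst x) (snd z) (snd x) = snd x"
      using le lx unfolding ble_def by (intro nth_equalityI) auto
    then show ?thesis by (simp del: upt_Suc add: hd_map)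
  qed
  have lst: "last ?ys = z"
  proof -
    have "mix d (fst z) (snd z) (snd x) = snd z"
      using le lz unfolding ble_def by (intro nth_equalityI) auto
    then show ?thesis using ij by (simp del: upt_Suc add: last_map)
  qed
  have sub: "set ?ys \<subseteq> BF_V d" using ij zd by (auto simp: BF_V_iff)
  have adj: "\<forall>k. Suc k < length ?ys \<longrightarrow> BF_E d (?ys!k) (?ys!Suc k)"
  proof (intro allI impI)
    fix k assume "Suc k < length ?ys"
    then have k: "Suc k \<le> fst z - fst x" by (simp del: upt_Suc)
    have n: "?ys!j = (fst x + j, mix d (fst x + j) (snd z) (snd x))" if "j < Suc (fst z - fst x)" for j
      using that by (simp del: upt_Suc)
    show "BF_E d (?ys!k) (?ys!Suc k)"
    proof -
      have a: "?ys!k = (fst x + k, mix d (fst x + k) (snd z) (snd x))" using k by (intro n) simp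
      have b: "?ys!Suc k = (fst x + Suc k, mix d (fst x + Suc k) (snd z) (snd x))" using k by (intro n) simp
      show ?thesis unfolding a b using k ij zd by (auto simp: BF_E_iff)
    qed
  qed
  show ?thesis unfolding walk_of_len_def is_walk_def using hd lst sub adj by auto
qed

lemma internal_nth: "0 < p \<Longrightarrow> Suc p < length xs \<Longrightarrow> xs!p \<in> internal_vertices xs"
proof -
  assume p: "0 < p" "Suc p < length xs"
  have "butlast (tl xs) ! (p - 1) = xs ! p"
    using p by (simp add: nth_butlast nth_tl)
  moreover have "p - 1 < length (butlast (tl xs))" using p by simp
  ultimately show ?thesis unfolding internal_vertices_def by (metis nth_mem)
qed

lemma mv_sub: "mutual_visibility_set V E X \<Longrightarrow> X \<subseteq> V"
  unfolding mutual_visibility_set_def by blast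

lemma no3:
  assumes mv: "mutual_visibility_set (BF_V d) (BF_E d) X"
    and xyz: "x \<in> X" "y \<in> X" "z \<in> X" and l1: "ble d x y" and l2: "ble d y z"
    and ne: "x \<noteq> y" "y \<noteq> z"
  shows False
proof -
  have XV: "X \<subseteq> BF_V d" using mv_sub[OF mv] .
  have xV: "x \<in> BF_V d" and yV: "y \<in> BF_V d" and zV: "z \<in> BF_V d" using XV xyz by auto
  have lxy: "fst x < fst y" using ble_lev[OF l1 xV yV ne(1)] .
  have lyz: "fst y < fst z" using ble_lev[OF l2 yV zV ne(2)] .
  have lxz: "ble d x z" using ble_trans[OF l1 l2] .
  obtain xs where sp: "shortest_path (BF_V d) (BF_E d) x z xs"
    and free: "internal_vertices xs \<inter> X = {}"
    using mv xyz unfolding mutual_visibility_set_def X_visible_def by blast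
  define D where "D = graph_dist (BF_V d) (BF_E d) x z"
  have wl: "walk_of_len (BF_V d) (BF_E d) x z D xs" using sp unfolding shortest_path_def D_def .
  have "D \<le> fst z - fst x"
    unfolding D_def graph_dist_def using chain_walk[OF xV zV lxz] by (intro Least_le) blast
  have w: "is_walk (BF_V d) (BF_E d) xs" and len: "length xs = Suc D"
    and hx: "hd xs = x" and lx: "last xs = z"
    using wl unfolding walk_of_len_def by auto
  have ne: "xs \<noteq> []" using len by auto
  have h0: "xs!0 = x" using hx ne by (simp add: hd_conv_nth)
  have hD: "xs!D = z" using lx ne len by (simp add: last_conv_nth)
  have "fst (xs!D) \<le> fst (xs!0) + D" using walk_lev_le[OF w, of 0 D] len by simp
  then have DD: "D = fst z - fst x" using \<open>D \<le> fst z - fst x\<close> h0 hD by simp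
  define k where "k = fst y - fst x"
  have kD: "k \<le> D" using DD k_def lyz by simp
  have "xs!k = (fst x + k, mix d (fst x + k) (snd z) (snd x))"
    using walk_mono[OF w len _ kD] h0 hD DD lxy lyz by simp
  also have "\<dots> = y"
  proof -
    have ly: "length (snd y) = d" using yV BF_V_iff by auto
    have "mix d (fst y) (snd z) (snd x) = snd y"
      using l1 l2 ly lxy lyz unfolding ble_def by (intro nth_equalityI) auto
    then show ?thesis using k_def lxy by (simp add: prod_eq_iff)
  qed
  finally have xk: "xs!k = y" .
  have "0 < k" using k_def lxy by simp
  moreover have "Suc k < length xs" using k_def lxy lyz len DD by simp
  ultimately have "y \<in> internal_vertices xs" using internal_nth[of k xs] xk by simp
  then show False using free xyz by blast
qed



definition tops :: "nat \<Rightarrow> (nat \<times> bool list) set \<Rightarrow> (nat \<times> bool list) set" where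
  "tops d X = {x\<in>X. \<forall>y\<in>X. ble d y x \<longrightarrow> y = x}"

lemma finite_strings: "finite {c::bool list. length c = n}"
  using finite_lists_length_eq[of "UNIV::bool set" n] by simp

lemma card_strings: "card {c::bool list. length c = n} = 2 ^ n"
  using card_lists_length_eq[of "UNIV::bool set" n] by simp

lemma card_strings0: "card {c::bool list. length c = Suc n \<and> c!0 = b} = 2 ^ n"
proof -
  have "{c::bool list. length c = Suc n \<and> c!0 = b} = (\<lambda>xs. b # xs) ` {c. length c = n}"
  proof
    show "{c::bool list. length c = Suc n \<and> c!0 = b} \<subseteq> (\<lambda>xs. b # xs) ` {c. length c = n}"
    proof
      fix c :: "bool list" assume "c \<in> {c. length c = Suc n \<and> c!0 = b}"
      then show "c \<in> (\<lambda>xs. b # xs) ` {c. length c = n}"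
        by (cases c) auto
    qed
  qed auto
  moreover have "inj (\<lambda>xs::bool list. b # xs)" by (auto simp: inj_def)
  ultimately show ?thesis using card_strings[of n] by (simp add: card_image inj_on_def)
qed

lemma finite_BF_V: "finite (BF_V d)"
proof -
  have "BF_V d \<subseteq> {..d} \<times> {c. length c = d}" unfolding BF_V_def by auto
  then show ?thesis using finite_strings by (meson finite_SigmaI finite_atMost finite_subset)
qed

lemma antichain_card:
  assumes A: "A \<subseteq> BF_V d" and ac: "\<forall>x\<in>A. \<forall>y\<in>A. ble d x y \<longrightarrow> x = y"
  shows "card A \<le> 2 ^ d"
proof -
  have inj: "inj_on snd A"
  proof (rule inj_onI)
    fix x y assume "x \<in> A" "y \<in> A" "snd x = snd y"
    then show "x = y" using ble_same[of x d y] A ac by blast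
  qed
  have "snd ` A \<subseteq> {c. length c = d}" using A by (auto simp: BF_V_iff)
  then have "card (snd ` A) \<le> 2 ^ d" using card_mono[OF finite_strings] card_strings by metis
  then show ?thesis using card_image[OF inj] by simp
qed

lemma antichain_card0:
  assumes A: "A \<subseteq> BF_V (Suc n)" and ac: "\<forall>x\<in>A. \<forall>y\<in>A. ble (Suc n) x y \<longrightarrow> x = y"
    and b: "\<forall>x\<in>A. snd x ! 0 = b"
  shows "card A \<le> 2 ^ n"
proof -
  have inj: "inj_on snd A"
  proof (rule inj_onI)
    fix x y assume "x \<in> A" "y \<in> A" "snd x = snd y"
    then show "x = y" using ble_same[of x "Suc n" y] A ac by blast
  qed
  have "snd ` A \<subseteq> {c. length c = Suc n \<and> c!0 = b}" using A b by (auto simp: BF_V_iff)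
  moreover have "finite {c::bool list. length c = Suc n \<and> c!0 = b}"
    by (rule finite_subset[OF _ finite_strings[of "Suc n"]]) auto
  ultimately have "card (snd ` A) \<le> card {c::bool list. length c = Suc n \<and> c!0 = b}"
    by (intro card_mono)
  then have "card (snd ` A) \<le> 2 ^ n" unfolding card_strings0 .
  then show ?thesis using card_image[OF inj] by simp
qed

lemma onchain_ble:
  "snd x = mix d (fst x) e c \<Longrightarrow> snd y = mix d (fst y) e c \<Longrightarrow> fst x \<le> fst y \<Longrightarrow> ble d x y"
  unfolding ble_def by auto

lemma edge_chain:
  assumes "BF_E d x y"
  shows "\<exists>c e. length c = d \<and> length e = d \<and> snd x = mix d (fst x) e c \<and> snd y = mix d (fst y) e c"
proof -
  have lx: "length (snd x) = d" and ly: "length (snd y) = d" using assms unfolding BF_E_iff' by auto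
  from assms consider "fst y = Suc (fst x)" "\<forall>p<d. p \<noteq> fst x \<longrightarrow> snd x!p = snd y!p"
    | "fst x = Suc (fst y)" "\<forall>p<d. p \<noteq> fst y \<longrightarrow> snd x!p = snd y!p"
    unfolding BF_E_iff' by blast
  then show ?thesis
  proof cases
    case 1
    have "snd x = mix d (fst x) (snd y) (snd x)" using 1 lx by (intro nth_equalityI) auto
    moreover have "snd y = mix d (fst y) (snd y) (snd x)" using 1 ly by (intro nth_equalityI) auto
    ultimately show ?thesis using lx ly by blast
  next
    case 2
    have "snd x = mix d (fst x) (snd x) (snd y)" using 2 lx by (intro nth_equalityI) auto
    moreover have "snd y = mix d (fst y) (snd x) (snd y)" using 2 ly by (intro nth_equalityI) auto
    ultimately show ?thesis using lx ly by blast
  qed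
qed

lemma transversal:
  assumes T: "T \<subseteq> BF_V d" and ac: "\<forall>x\<in>T. \<forall>y\<in>T. ble d x y \<longrightarrow> x = y"
    and cT: "card T = 2 ^ d" and lc: "length c = d" and le: "length e = d"
  shows "\<exists>t\<in>T. snd t = mix d (fst t) e c"
proof -
  define s where "s k = (c!k \<noteq> e!k)" for k
  define g where "g t = map (\<lambda>k. if k < fst t then (snd t!k \<noteq> s k) else snd t!k) [0..<d]" for t :: "nat \<times> bool list"
  define e' where "e' c' = map (\<lambda>k. c'!k \<noteq> s k) [0..<d]" for c' :: "bool list"
  have on: "snd t = mix d (fst t) (e' (g t)) (g t)" if "t \<in> T" for t
  proof -
    have "length (snd t) = d" using that T by (auto simp: BF_V_iff)
    then show ?thesis unfolding e'_def g_def by (intro nth_equalityI) auto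
  qed
  have inj: "inj_on g T"
  proof (rule inj_onI)
    fix x y assume x: "x \<in> T" and y: "y \<in> T" and gg: "g x = g y"
    have ox: "snd x = mix d (fst x) (e' (g x)) (g x)" using on[OF x] .
    have oy: "snd y = mix d (fst y) (e' (g x)) (g x)" using on[OF y] gg by simp
    show "x = y"
    proof (cases "fst x \<le> fst y")
      case True
      then have "ble d x y" using onchain_ble[OF ox oy] by simp
      then show ?thesis using ac x y by blast
    next
      case False
      then have "ble d y x" using onchain_ble[OF oy ox] by simp
      then show ?thesis using ac x y by metis
    qed
  qed
  have sub: "g ` T \<subseteq> {c. length c = d}" unfolding g_def by auto
  have "card (g ` T) = 2 ^ d" using card_image[OF inj] cT by simp
  then have "g ` T = {c. length c = d}"
    using card_subset_eq[OF finite_strings sub] card_strings by simp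
  then obtain t where t: "t \<in> T" "g t = c" using lc by (metis (mono_tags, lifting) imageE mem_Collect_eq)
  have "e' c = e" unfolding e'_def s_def using lc le by (intro nth_equalityI) auto
  then have "snd t = mix d (fst t) e c" using on[OF t(1)] t(2) by simp
  then show ?thesis using t by blast
qed

lemma walk_bit0:
  assumes w: "is_walk (BF_V d) (BF_E d) xs" and d: "0 < d"
    and nz: "\<forall>k<length xs. fst (xs!k) \<noteq> 0" and k: "k < length xs"
  shows "snd (xs!k) ! 0 = snd (xs!0) ! 0"
  using k
proof (induction k)
  case 0 then show ?case by simp
next
  case (Suc k)
  have e: "BF_E d (xs!k) (xs!Suc k)" using walk_E[OF w] Suc by simp
  have "fst (xs!k) \<noteq> 0" "fst (xs!Suc k) \<noteq> 0" using nz Suc by auto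
  moreover have "(\<forall>p<d. p \<noteq> fst (xs!k) \<longrightarrow> snd (xs!k)!p = snd (xs!Suc k)!p) \<or>
      (\<forall>p<d. p \<noteq> fst (xs!Suc k) \<longrightarrow> snd (xs!k)!p = snd (xs!Suc k)!p)"
    using e unfolding BF_E_iff' by blast
  ultimately have "snd (xs!k) ! 0 = snd (xs!Suc k) ! 0" using d by metis
  then show ?case using Suc by simp
qed



lemma tops_sub: "tops d X \<subseteq> X" unfolding tops_def by auto

lemma tops_ac: "\<forall>x\<in>tops d X. \<forall>y\<in>tops d X. ble d x y \<longrightarrow> x = y"
  unfolding tops_def by auto

lemma below_top:
  assumes mv: "mutual_visibility_set (BF_V d) (BF_E d) X" and r: "r \<in> X - tops d X"
  shows "\<exists>t\<in>tops d X. ble d t r \<and> t \<noteq> r"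
proof -
  obtain y where y: "y \<in> X" "ble d y r" "y \<noteq> r" using r unfolding tops_def by auto
  have "y \<in> tops d X"
    unfolding tops_def
  proof (safe)
    show "y \<in> X" by fact
    fix z assume "z \<in> X" "ble d z y"
    then show "z = y" using no3[OF mv \<open>z \<in> X\<close> y(1) _ \<open>ble d z y\<close> y(2) _ y(3)] r by blast
  qed
  then show ?thesis using y by blast
qed

lemma rest_ac:
  assumes mv: "mutual_visibility_set (BF_V d) (BF_E d) X"
  shows "\<forall>x\<in>X - tops d X. \<forall>y\<in>X - tops d X. ble d x y \<longrightarrow> x = y"
proof (intro ballI impI)
  fix x y assume x: "x \<in> X - tops d X" and y: "y \<in> X - tops d X" and l: "ble d x y"
  obtain t where t: "t \<in> tops d X" "ble d t x" "t \<noteq> x" using below_top[OF mv x] by blast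
  show "x = y"
  proof (rule ccontr)
    assume "x \<noteq> y"
    then show False using no3[OF mv _ _ _ t(2) l t(3)] t(1) x y tops_sub by blast
  qed
qed

lemma mainL:
  assumes d: "2 \<le> d" and mv: "mutual_visibility_set (BF_V d) (BF_E d) X"
    and cT: "card (tops d X) = 2 ^ d"
  shows "card (X - tops d X) \<le> 2 ^ d - 2"
proof -
  define T where "T = tops d X"
  define R where "R = X - T"
  have XV: "X \<subseteq> BF_V d" using mv_sub[OF mv] .
  have TX: "T \<subseteq> X" unfolding T_def by (rule tops_sub)
  have TV: "T \<subseteq> BF_V d" using TX XV by blast
  have Tac: "\<forall>x\<in>T. \<forall>y\<in>T. ble d x y \<longrightarrow> x = y" unfolding T_def by (rule tops_ac)
  have Rac: "\<forall>x\<in>R. \<forall>y\<in>R. ble d x y \<longrightarrow> x = y" unfolding R_def T_def by (rule rest_ac[OF mv])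
  have RV: "R \<subseteq> BF_V d" using XV R_def by blast
  have bt: "\<exists>t\<in>T. ble d t r \<and> t \<noteq> r" if "r \<in> R" for r
    using below_top[OF mv] that unfolding R_def T_def by blast
  have cTT: "card T = 2 ^ d" using cT T_def by simp
  show ?thesis
  proof (cases "\<exists>r1\<in>R. \<exists>r2\<in>R. snd r1 ! 0 \<noteq> snd r2 ! 0")
    case False
    show ?thesis
    proof (cases "R = {}")
      case True
      then have eq: "X - tops d X = {}" unfolding R_def T_def .
      show ?thesis by (subst eq) simp
    next
      case ne: False
      then obtain r0 where r0: "r0 \<in> R" by blast
      obtain n where n: "d = Suc n" using d by (cases d) auto
      have bb0: "\<forall>x\<in>R. snd x ! 0 = snd r0 ! 0" using False r0 by blast
      have RV': "R \<subseteq> BF_V (Suc n)" using RV n by simp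
      have Rac': "\<forall>x\<in>R. \<forall>y\<in>R. ble (Suc n) x y \<longrightarrow> x = y" using Rac n by simp
      have "card R \<le> 2 ^ n" by (rule antichain_card0[OF RV' Rac' bb0])
      moreover have "2 ^ n \<le> (2::nat) ^ d - 2"
      proof -
        have "1 \<le> n" using d n by simp
        then have "2 \<le> (2::nat) ^ n" using power_increasing[of 1 n "2::nat"] by simp
        then show ?thesis using n by simp
      qed
      ultimately have "card R \<le> 2 ^ d - 2" by (rule order_trans)
      then show ?thesis unfolding R_def T_def .
    qed
  next
    case True
    then obtain r1 r2 where r: "r1 \<in> R" "r2 \<in> R" and b: "snd r1 ! 0 \<noteq> snd r2 ! 0" by blast
    have rX: "r1 \<in> X" "r2 \<in> X" using r R_def by auto
    obtain xs where sp: "shortest_path (BF_V d) (BF_E d) r1 r2 xs"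
      and free: "internal_vertices xs \<inter> X = {}"
      using mv rX unfolding mutual_visibility_set_def X_visible_def by blast
    have w: "is_walk (BF_V d) (BF_E d) xs" and hx: "hd xs = r1" and lx: "last xs = r2"
      using sp unfolding shortest_path_def walk_of_len_def by auto
    have ne: "xs \<noteq> []" using w unfolding is_walk_def by auto
    have h0: "xs!0 = r1" using hx ne by (simp add: hd_conv_nth)
    have hL: "xs!(length xs - 1) = r2" using lx ne by (simp add: last_conv_nth)
    have lev1: "0 < fst r" if rR: "r \<in> R" for r
    proof -
      obtain t where "t \<in> T" "ble d t r" "t \<noteq> r" using bt[OF rR] by blast
      then have "fst t < fst r" using ble_lev[of d t r] TV RV rR by blast
      then show ?thesis by simp
    qed
    have "\<exists>k<length xs. fst (xs!k) = 0"
    proof (rule ccontr)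
      assume "\<not> ?thesis"
      then have "snd (xs!(length xs - 1)) ! 0 = snd (xs!0) ! 0"
        using walk_bit0[OF w, of "length xs - 1"] d ne by auto
      then show False using h0 hL b by simp
    qed
    then obtain k where k: "k < length xs" "fst (xs!k) = 0" by blast
    define inD where "inD x = (\<exists>t\<in>T. ble d t x \<and> t \<noteq> x)" for x
    have D0: "inD (xs!0)" using bt[OF r(1)] h0 inD_def by simp
    have Dk: "\<not> inD (xs!k)"
    proof
      assume "inD (xs!k)"
      then obtain t where "t \<in> T" "ble d t (xs!k)" "t \<noteq> xs!k" unfolding inD_def by blast
      moreover have "xs!k \<in> BF_V d" using walk_V[OF w k(1)] .
      ultimately have "fst t < fst (xs!k)" using ble_lev[of d t "xs!k"] TV by blast
      then show False using k by simp
    qed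
    define p where "p = (LEAST p. \<not> inD (xs!p))"
    have np: "\<not> inD (xs!p)" unfolding p_def using Dk by (rule LeastI)
    have pk: "p \<le> k" unfolding p_def using Dk by (rule Least_le)
    have p0: "0 < p" using np D0 by (cases p) auto
    have Dp: "inD (xs!(p - 1))" using not_less_Least[of "p - 1" "\<lambda>p. \<not> inD (xs!p)"] p0 p_def by simp
    have klast: "k \<noteq> length xs - 1" using k hL lev1[OF r(2)] by auto
    have pl: "Suc p < length xs" using pk k klast by simp
    define a where "a = xs!(p - 1)"
    define bb where "bb = xs!p"
    have e: "BF_E d a bb" unfolding a_def bb_def using walk_E[OF w, of "p - 1"] p0 pl by simp
    have aV: "a \<in> BF_V d" and bV: "bb \<in> BF_V d" using walk_V[OF w] pl unfolding a_def bb_def by auto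
    obtain c ee where ce: "length c = d" "length ee = d" "snd a = mix d (fst a) ee c" "snd bb = mix d (fst bb) ee c"
      using edge_chain[OF e] by blast
    obtain ts where ts: "ts \<in> T" "snd ts = mix d (fst ts) ee c"
      using transversal[OF TV Tac cTT ce(1) ce(2)] by blast
    have tsV: "ts \<in> BF_V d" using ts TV by blast
    obtain t' where t': "t' \<in> T" "ble d t' a" "t' \<noteq> a" using Dp unfolding inD_def a_def by blast
    have lt: "fst ts < fst a"
    proof (rule ccontr)
      assume "\<not> ?thesis"
      then have "ble d a ts" using onchain_ble[OF ce(3) ts(2)] by simp
      then have "ble d t' ts" using ble_trans t'(2) by blast
      then have "t' = ts" using Tac t'(1) ts(1) by blast
      then have "a = ts" using ble_antisym[OF \<open>ble d a ts\<close> _ aV tsV] t'(2) by simp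
      then show False using t' \<open>t' = ts\<close> by simp
    qed
    have lb: "fst bb \<le> fst ts"
    proof (rule ccontr)
      assume "\<not> ?thesis"
      then have "ble d ts bb" "ts \<noteq> bb" using onchain_ble[OF ts(2) ce(4)] by auto
      then have "inD bb" using ts(1) inD_def by blast
      then show False using np bb_def by simp
    qed
    have "fst bb = Suc (fst a) \<or> fst a = Suc (fst bb)" using e unfolding BF_E_iff' by blast
    then have "fst bb = fst ts" using lt lb by auto
    then have "bb = ts" using ts(2) ce(4) by (simp add: prod_eq_iff)
    then have "bb \<in> X" using ts(1) TX by blast
    moreover have "bb \<in> internal_vertices xs" unfolding bb_def using internal_nth[OF p0 pl] .
    ultimately show ?thesis using free by blast
  qed
qed



lemma walk_map:
  assumes w: "walk_of_len V E x y k xs" and Vc: "\<sigma> ` V \<subseteq> V"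
    and Ec: "\<And>a b. a \<in> V \<Longrightarrow> b \<in> V \<Longrightarrow> E a b \<Longrightarrow> E (\<sigma> a) (\<sigma> b)"
  shows "walk_of_len V E (\<sigma> x) (\<sigma> y) k (map \<sigma> xs)"
proof -
  have iw: "is_walk V E xs" and h: "hd xs = x" "last xs = y" "length xs = Suc k"
    using w unfolding walk_of_len_def by auto
  have ne: "xs \<noteq> []" using h by auto
  have "is_walk V E (map \<sigma> xs)"
    unfolding is_walk_def
  proof (intro conjI allI impI)
    show "map \<sigma> xs \<noteq> []" using ne by simp
    show "set (map \<sigma> xs) \<subseteq> V" using iw Vc unfolding is_walk_def by auto
    fix i assume i: "Suc i < length (map \<sigma> xs)"
    then have "E (xs!i) (xs!Suc i)" "xs!i \<in> V" "xs!Suc i \<in> V" using iw unfolding is_walk_def by auto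
    then show "E (map \<sigma> xs ! i) (map \<sigma> xs ! Suc i)" using Ec i by simp
  qed
  then show ?thesis unfolding walk_of_len_def using h ne by (simp add: hd_map last_map)
qed

lemma dist_map:
  assumes inv: "\<And>a. a \<in> V \<Longrightarrow> \<sigma> (\<sigma> a) = a" and Vc: "\<sigma> ` V \<subseteq> V"
    and Ec: "\<And>a b. a \<in> V \<Longrightarrow> b \<in> V \<Longrightarrow> E a b \<Longrightarrow> E (\<sigma> a) (\<sigma> b)"
    and x: "x \<in> V" and y: "y \<in> V"
  shows "graph_dist V E (\<sigma> x) (\<sigma> y) = graph_dist V E x y"
proof -
  have "(\<lambda>k. \<exists>xs. walk_of_len V E (\<sigma> x) (\<sigma> y) k xs) = (\<lambda>k. \<exists>xs. walk_of_len V E x y k xs)"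
  proof (rule ext, rule iffI)
    fix k assume "\<exists>xs. walk_of_len V E (\<sigma> x) (\<sigma> y) k xs"
    then obtain xs where "walk_of_len V E (\<sigma> x) (\<sigma> y) k xs" by blast
    from walk_map[OF this Vc Ec] have "walk_of_len V E x y k (map \<sigma> xs)" using inv x y by simp
    then show "\<exists>xs. walk_of_len V E x y k xs" by blast
  next
    fix k assume "\<exists>xs. walk_of_len V E x y k xs"
    then obtain xs where "walk_of_len V E x y k xs" by blast
    from walk_map[OF this Vc Ec] show "\<exists>xs. walk_of_len V E (\<sigma> x) (\<sigma> y) k xs" by blast
  qed
  then show ?thesis unfolding graph_dist_def by simp
qed

lemma auto_mv:
  assumes inv: "\<And>a. a \<in> V \<Longrightarrow> \<sigma> (\<sigma> a) = a" and Vc: "\<sigma> ` V \<subseteq> V"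
    and Ec: "\<And>a b. a \<in> V \<Longrightarrow> b \<in> V \<Longrightarrow> E a b \<Longrightarrow> E (\<sigma> a) (\<sigma> b)"
    and mv: "mutual_visibility_set V E X"
  shows "mutual_visibility_set V E (\<sigma> ` X)"
proof -
  have XV: "X \<subseteq> V" using mv unfolding mutual_visibility_set_def by blast
  have vis: "X_visible V E (\<sigma> ` X) (\<sigma> x) (\<sigma> y)" if x: "x \<in> X" and y: "y \<in> X" for x y
  proof -
    obtain xs where sp: "shortest_path V E x y xs" and fr: "internal_vertices xs \<inter> X = {}"
      using mv x y unfolding mutual_visibility_set_def X_visible_def by blast
    have wl: "walk_of_len V E x y (graph_dist V E x y) xs" using sp unfolding shortest_path_def .
    have "walk_of_len V E (\<sigma> x) (\<sigma> y) (graph_dist V E x y) (map \<sigma> xs)" by (rule walk_map[OF wl Vc Ec])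
    moreover have dd: "graph_dist V E (\<sigma> x) (\<sigma> y) = graph_dist V E x y"
      apply (rule dist_map)
      using inv Vc Ec x y XV by auto
    ultimately have sp2: "shortest_path V E (\<sigma> x) (\<sigma> y) (map \<sigma> xs)"
      unfolding shortest_path_def by simp
    have sV: "set xs \<subseteq> V" using wl unfolding walk_of_len_def is_walk_def by blast
    have iv: "internal_vertices (map \<sigma> xs) = \<sigma> ` internal_vertices xs"
      unfolding internal_vertices_def by (metis list.set_map map_butlast map_tl)
    have tls: "z \<in> set xs" if "z \<in> set (tl xs)" for z using that by (cases xs) auto
    have ivV: "internal_vertices xs \<subseteq> V"
    proof
      fix z assume "z \<in> internal_vertices xs"
      then have "z \<in> set (tl xs)" unfolding internal_vertices_def by (rule in_set_butlastD)
      then show "z \<in> V" using tls sV by blast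
    qed
    have "internal_vertices (map \<sigma> xs) \<inter> \<sigma> ` X = {}"
    proof (rule ccontr)
      assume "\<not> ?thesis"
      then obtain a b where a: "a \<in> internal_vertices xs" and b: "b \<in> X" and ab: "\<sigma> a = \<sigma> b"
        unfolding iv by blast
      then have "\<sigma> (\<sigma> a) = \<sigma> (\<sigma> b)" by simp
      moreover have "\<sigma> (\<sigma> a) = a" using inv a ivV by blast
      moreover have "\<sigma> (\<sigma> b) = b" using inv b XV by blast
      ultimately have "a = b" by simp
      then show False using a b fr by blast
    qed
    then show ?thesis unfolding X_visible_def using sp2 by blast
  qed
  have "\<sigma> ` X \<subseteq> V" using XV Vc by blast
  moreover have "\<forall>x\<in>\<sigma> ` X. \<forall>y\<in>\<sigma> ` X. X_visible V E (\<sigma> ` X) x y"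
  proof (intro ballI)
    fix u v assume "u \<in> \<sigma> ` X" "v \<in> \<sigma> ` X"
    then obtain x y where "x \<in> X" "y \<in> X" "u = \<sigma> x" "v = \<sigma> y" by blast
    then show "X_visible V E (\<sigma> ` X) u v" using vis by simp
  qed
  ultimately show ?thesis unfolding mutual_visibility_set_def by blast
qed

definition rho :: "nat \<Rightarrow> nat \<times> bool list \<Rightarrow> nat \<times> bool list" where
  "rho d x = (d - fst x, rev (snd x))"

lemma rho_inv: "x \<in> BF_V d \<Longrightarrow> rho d (rho d x) = x"
  unfolding rho_def by (simp add: BF_V_iff prod_eq_iff)

lemma rho_V: "rho d ` BF_V d \<subseteq> BF_V d"
  unfolding rho_def by (auto simp: BF_V_iff)

lemma rho_E:
  assumes e: "BF_E d x y"
  shows "BF_E d (rho d x) (rho d y)"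
proof -
  have lx: "length (snd x) = d" and ly: "length (snd y) = d" and fx: "fst x \<le> d" and fy: "fst y \<le> d"
    using e unfolding BF_E_iff' by auto
  from e consider "fst y = Suc (fst x)" "\<forall>p<d. p \<noteq> fst x \<longrightarrow> snd x!p = snd y!p"
    | "fst x = Suc (fst y)" "\<forall>p<d. p \<noteq> fst y \<longrightarrow> snd x!p = snd y!p"
    unfolding BF_E_iff' by blast
  then show ?thesis
  proof cases
    case 1
    have "\<forall>p<d. p \<noteq> d - fst y \<longrightarrow> rev (snd x)!p = rev (snd y)!p"
    proof (intro allI impI)
      fix p assume p: "p < d" "p \<noteq> d - fst y"
      then have "d - Suc p \<noteq> fst x" using 1 fy by auto
      then show "rev (snd x)!p = rev (snd y)!p" using 1 p lx ly by (simp add: rev_nth)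
    qed
    then show ?thesis unfolding BF_E_iff' rho_def using lx ly fx fy 1 by auto
  next
    case 2
    have "\<forall>p<d. p \<noteq> d - fst x \<longrightarrow> rev (snd x)!p = rev (snd y)!p"
    proof (intro allI impI)
      fix p assume p: "p < d" "p \<noteq> d - fst x"
      then have "d - Suc p \<noteq> fst y" using 2 fx by auto
      then show "rev (snd x)!p = rev (snd y)!p" using 2 p lx ly by (simp add: rev_nth)
    qed
    then show ?thesis unfolding BF_E_iff' rho_def using lx ly fx fy 2 by auto
  qed
qed

lemma rho_ble:
  assumes "ble d x y" "x \<in> BF_V d" "y \<in> BF_V d"
  shows "ble d (rho d y) (rho d x)"
proof -
  have lx: "length (snd x) = d" and ly: "length (snd y) = d" and fx: "fst x \<le> d" and fy: "fst y \<le> d"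
    using assms BF_V_iff by auto
  have le: "fst x \<le> fst y" and ag: "\<forall>k<d. (k < fst x \<or> fst y \<le> k) \<longrightarrow> snd x ! k = snd y ! k"
    using assms(1) unfolding ble_def by auto
  have "\<forall>k<d. (k < d - fst y \<or> d - fst x \<le> k) \<longrightarrow> rev (snd y) ! k = rev (snd x) ! k"
  proof (intro allI impI)
    fix k assume k: "k < d" "k < d - fst y \<or> d - fst x \<le> k"
    then have "d - Suc k < fst x \<or> fst y \<le> d - Suc k" using fx fy by auto
    moreover have "d - Suc k < d" using k by simp
    ultimately have "snd x ! (d - Suc k) = snd y ! (d - Suc k)" using ag by blast
    then show "rev (snd y) ! k = rev (snd x) ! k" using k lx ly by (simp add: rev_nth)
  qed
  then show ?thesis unfolding ble_def rho_def using le fy by auto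
qed

definition bots :: "nat \<Rightarrow> (nat \<times> bool list) set \<Rightarrow> (nat \<times> bool list) set" where
  "bots d X = {x\<in>X. \<forall>y\<in>X. ble d x y \<longrightarrow> y = x}"

lemma rho_inj: "inj_on (rho d) (BF_V d)"
  by (metis inj_onI rho_inv)

lemma tops_rho:
  assumes XV: "X \<subseteq> BF_V d"
  shows "tops d (rho d ` X) = rho d ` bots d X"
proof
  show "tops d (rho d ` X) \<subseteq> rho d ` bots d X"
  proof
    fix z assume z: "z \<in> tops d (rho d ` X)"
    then obtain x where x: "x \<in> X" "z = rho d x" unfolding tops_def by blast
    have "x \<in> bots d X" unfolding bots_def
    proof (safe)
      show "x \<in> X" by fact
      fix y assume y: "y \<in> X" "ble d x y"
      then have "ble d (rho d y) (rho d x)" using rho_ble XV x by blast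
      moreover have "rho d y \<in> rho d ` X" using y by blast
      moreover have "\<forall>w\<in>rho d ` X. ble d w z \<longrightarrow> w = z" using z unfolding tops_def by blast
      ultimately have "rho d y = rho d x" using x(2) by blast
      then show "y = x" using rho_inj[of d] XV x y by (meson inj_onD subsetD)
    qed
    then show "z \<in> rho d ` bots d X" using x by blast
  qed
next
  show "rho d ` bots d X \<subseteq> tops d (rho d ` X)"
  proof
    fix z assume "z \<in> rho d ` bots d X"
    then obtain x where x: "x \<in> bots d X" "z = rho d x" by blast
    have xX: "x \<in> X" using x unfolding bots_def by blast
    show "z \<in> tops d (rho d ` X)" unfolding tops_def
    proof (intro CollectI conjI ballI impI)
      show "z \<in> rho d ` X" using x xX by blast
      fix w assume w: "w \<in> rho d ` X" "ble d w z"
      then obtain y where y: "y \<in> X" "w = rho d y" by blast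
      have yV: "y \<in> BF_V d" and xV: "x \<in> BF_V d" using XV xX y(1) by auto
      have "ble d (rho d y) (rho d x)" using w(2) y(2) x(2) by simp
      then have "ble d (rho d (rho d x)) (rho d (rho d y))"
        using rho_ble rho_V xV yV by blast
      then have "ble d x y" using rho_inv xV yV by simp
      then have "y = x" using x y unfolding bots_def by blast
      then show "w = z" using x y by simp
    qed
  qed
qed

theorem mv_bound:
  assumes d: "2 \<le> d" and mv: "mutual_visibility_set (BF_V d) (BF_E d) X"
  shows "card X \<le> 2 ^ (d + 1) - 2"
proof -
  have XV: "X \<subseteq> BF_V d" using mv_sub[OF mv] .
  have fX: "finite X" using XV finite_BF_V finite_subset by blast
  define T where "T = tops d X"
  define B where "B = bots d X"
  have TX: "T \<subseteq> X" unfolding T_def tops_def by blast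
  have BX: "B \<subseteq> X" unfolding B_def bots_def by blast
  have cT: "card T \<le> 2 ^ d" using antichain_card[of T d] TX XV tops_ac unfolding T_def by blast
  have Bac: "\<forall>x\<in>B. \<forall>y\<in>B. ble d x y \<longrightarrow> x = y" unfolding B_def bots_def by auto
  have cB: "card B \<le> 2 ^ d" using antichain_card[of B d] BX XV Bac by blast
  have XTB: "X - T \<subseteq> B"
  proof
    fix x assume x: "x \<in> X - T"
    then obtain y where y: "y \<in> X" "ble d y x" "y \<noteq> x" unfolding T_def tops_def by blast
    show "x \<in> B" unfolding B_def bots_def
    proof (safe)
      show "x \<in> X" using x by blast
      fix z assume "z \<in> X" "ble d x z"
      then show "z = x" using no3[OF mv y(1) _ _ y(2)] x y by blast
    qed
  qed
  have XBT: "X - B \<subseteq> T"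
  proof
    fix x assume x: "x \<in> X - B"
    then obtain y where y: "y \<in> X" "ble d x y" "y \<noteq> x" unfolding B_def bots_def by blast
    show "x \<in> T" unfolding T_def tops_def
    proof (safe)
      show "x \<in> X" using x by blast
      fix z assume "z \<in> X" "ble d z x"
      then show "z = x" using no3[OF mv _ _ y(1) _ y(2)] x y by blast
    qed
  qed
  have sT: "card X = card T + card (X - T)"
    using card_Diff_subset[OF finite_subset[OF TX fX] TX] card_mono[OF fX TX] by simp
  have sB: "card X = card B + card (X - B)"
    using card_Diff_subset[OF finite_subset[OF BX fX] BX] card_mono[OF fX BX] by simp
  have cXT: "card (X - T) \<le> card B" using card_mono[OF finite_subset[OF BX fX] XTB] .
  have cXB: "card (X - B) \<le> card T" using card_mono[OF finite_subset[OF TX fX] XBT] .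
  have p: "(2::nat) ^ (d + 1) = 2 ^ d + 2 ^ d" by simp
  have p2: "4 \<le> (2::nat) ^ d" using power_increasing[of 2 d "2::nat"] d by simp
  show ?thesis
  proof (cases "card T = 2 ^ d")
    case True
    then have "card (X - T) \<le> 2 ^ d - 2" using mainL[OF d mv] T_def by simp
    then show ?thesis using sT True p p2 by linarith
  next
    case nT: False
    show ?thesis
    proof (cases "card B = 2 ^ d")
      case True
      define Y where "Y = rho d ` X"
      have mvY: "mutual_visibility_set (BF_V d) (BF_E d) Y"
        unfolding Y_def using auto_mv[where \<sigma>="rho d" and V="BF_V d" and E="BF_E d", OF rho_inv rho_V rho_E mv] by simp
      have inj: "inj_on (rho d) X" using rho_inj XV inj_on_subset by blast
      have tY: "tops d Y = rho d ` B" unfolding Y_def B_def using tops_rho[OF XV] .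
      have "card (tops d Y) = 2 ^ d" using tY True card_image[OF inj_on_subset[OF inj BX]] by simp
      then have c1: "card (Y - tops d Y) \<le> 2 ^ d - 2" using mainL[OF d mvY] by simp
      have "Y - tops d Y = rho d ` X - rho d ` B" using tY Y_def by simp
      also have "\<dots> = rho d ` (X - B)" using inj_on_image_set_diff[OF inj, of X B] BX by simp
      finally have "Y - tops d Y = rho d ` (X - B)" .
      then have "card (Y - tops d Y) = card (X - B)" using card_image[OF inj_on_subset[OF inj, of "X - B"]] by auto
      then have "card (X - B) \<le> 2 ^ d - 2" using c1 by simp
      then show ?thesis using sB True p p2 by linarith
    next
      case False
      then show ?thesis using sT cXT cT cB nT p p2 by linarith
    qed
  qed
qed

theorem lemma5p3:
  fixes d :: nat
  assumes "d \<ge> 2"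
  shows "mu (BF_V d) (BF_E d) \<le> 2 ^ (d + 1) - 2"
proof -
  define S where "S = {card X | X. mutual_visibility_set (BF_V d) (BF_E d) X}"
  have bd: "\<forall>a\<in>S. a \<le> 2 ^ (d + 1) - 2" unfolding S_def using mv_bound[OF assms] by blast
  have fin: "finite S" using bd by (meson finite_atMost finite_subset subsetI atMost_iff)
  have "mutual_visibility_set (BF_V d) (BF_E d) {}" unfolding mutual_visibility_set_def by simp
  then have ne: "S \<noteq> {}" unfolding S_def by blast
  show ?thesis unfolding mu_def S_def[symmetric] using Max_le_iff[OF fin ne] bd by blast
qed

end
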